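(* Let $X$ be a compact metric space and let $f\colon X\to X$ be a homeomorphism such that the restriction $f|_{\Omega(f)}\colon \Omega(f)\to\Omega(f)$ has the pseudo-orbit tracing property. If $f$ has a positively expansive measure, then $f$ has positive topological entropy, i.e. $h(f)>0$.
   Context: For a homeomorphism $g\colon Y\to Y$ of a metric space $(Y,d)$: given $\delta\ge 0$, a bi-infinite sequence $(x_i)_{i\in\mathbb{Z}}$ in $Y$ is a $\delta$-pseudo-orbit if $d(g(x_i),x_{i+1})\le\delta$ for all $i\in\mathbb{Z}$; it is $\epsilon$-shadowed if there is $x\in Y$ with $d(g^i(x),x_i)\le\epsilon$ for all $i\in\mathbb{Z}$. $g$ has the pseudo-orbit tracing property (POTP) if for every $\epsilon>0$ there is $\delta>0$ such that every $\delta$-pseudo-orbit of $g$ can be $\epsilon$-shadowed. The nonwandering set $\Omega(f)$ is the set of $x\in X$ such that for every neighborhood $U$ of $x$ there is $n\ge 1$ with $f^n(U)\cap U\ne\emptyset$; it is compact and $f(\Omega(f))=\Omega(f)$. For $x\in X$ and $\delta\ge0$ let $\Phi_\delta(x)=\{y\in X: d(f^i(x),f^i(y))\le\delta \text{ for all } i\in\mathbb{N}=\{0,1,2,\dots\}\}$. A (not necessarily invariant) Borel probability measure $\mu$ on $X$ is positively expansive if there is $e>0$ (an expansivity constant) such that $\mu(\Phi_e(x))=0$ for every $x\in X$. $h(f)$ denotes the topological entropy of $f$. *)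

theory Defs
  imports "HOL-Probability.Probability"
begin

definition zit :: "'a set \<Rightarrow> ('a \<Rightarrow> 'a) \<Rightarrow> int \<Rightarrow> 'a \<Rightarrow> 'a" where
  "zit Y g i x = (if 0 \<le> i then (g ^^ nat i) x else (inv_into Y g ^^ nat (- i)) x)"

definition pseudo_orbit :: "'a set \<Rightarrow> ('a \<Rightarrow> 'a) \<Rightarrow> real \<Rightarrow> (int \<Rightarrow> 'a::metric_space) \<Rightarrow> bool" where
  "pseudo_orbit Y g \<delta> xs \<longleftrightarrow> (\<forall>i. xs i \<in> Y) \<and> (\<forall>i. dist (g (xs i)) (xs (i + 1)) \<le> \<delta>)"

definition shadowed :: "'a set \<Rightarrow> ('a \<Rightarrow> 'a) \<Rightarrow> real \<Rightarrow> (int \<Rightarrow> 'a::metric_space) \<Rightarrow> bool" where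
  "shadowed Y g \<epsilon> xs \<longleftrightarrow> (\<exists>x\<in>Y. \<forall>i. dist (zit Y g i x) (xs i) \<le> \<epsilon>)"

definition POTP :: "'a::metric_space set \<Rightarrow> ('a \<Rightarrow> 'a) \<Rightarrow> bool" where
  "POTP Y g \<longleftrightarrow> (\<forall>\<epsilon>>0. \<exists>\<delta>>0. \<forall>xs. pseudo_orbit Y g \<delta> xs \<longrightarrow> shadowed Y g \<epsilon> xs)"

definition nonwandering :: "'a::metric_space set \<Rightarrow> ('a \<Rightarrow> 'a) \<Rightarrow> 'a set" where
  "nonwandering X f = {x \<in> X. \<forall>U. openin (top_of_set X) U \<and> x \<in> U \<longrightarrow>
      (\<exists>n\<ge>1. (f ^^ n) ` U \<inter> U \<noteq> {})}"

definition Phi :: "'a::metric_space set \<Rightarrow> ('a \<Rightarrow> 'a) \<Rightarrow> real \<Rightarrow> 'a \<Rightarrow> 'a set" where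
  "Phi X f \<delta> x = {y \<in> X. \<forall>i::nat. dist ((f ^^ i) x) ((f ^^ i) y) \<le> \<delta>}"

text \<open>Borel probability measure on X (not necessarily invariant) which is positively expansive.\<close>
definition pos_expansive_measure :: "'a::metric_space set \<Rightarrow> ('a \<Rightarrow> 'a) \<Rightarrow> 'a measure \<Rightarrow> bool" where
  "pos_expansive_measure X f M \<longleftrightarrow>
     prob_space M \<and> sets M = sets (restrict_space borel X) \<and>
     (\<exists>e>0. \<forall>x\<in>X. emeasure M (Phi X f e x) = 0)"

definition separated :: "'a::metric_space set \<Rightarrow> ('a \<Rightarrow> 'a) \<Rightarrow> nat \<Rightarrow> real \<Rightarrow> 'a set \<Rightarrow> bool" where
  "separated X f n \<epsilon> E \<longleftrightarrow> E \<subseteq> X \<and>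
     (\<forall>x\<in>E. \<forall>y\<in>E. x \<noteq> y \<longrightarrow> (\<exists>i<n. dist ((f ^^ i) x) ((f ^^ i) y) > \<epsilon>))"

definition max_sep :: "'a::metric_space set \<Rightarrow> ('a \<Rightarrow> 'a) \<Rightarrow> nat \<Rightarrow> real \<Rightarrow> ereal" where
  "max_sep X f n \<epsilon> = (SUP E \<in> {E. finite E \<and> separated X f n \<epsilon> E}. ereal (real (card E)))"

definition top_entropy :: "'a::metric_space set \<Rightarrow> ('a \<Rightarrow> 'a) \<Rightarrow> ereal" where
  "top_entropy X f = (SUP \<epsilon>\<in>{0<..}. limsup (\<lambda>n. ln (real_of_ereal (max_sep X f n \<epsilon>)) / real n))"

end

theory Submission
  imports Defs
begin


lemma funpow_in:
  assumes "f ` X \<subseteq> X" "x \<in> X" shows "(f ^^ n) x \<in> X"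
  using assms by (induction n) auto

lemma funpow_cont:
  assumes "continuous_on X f" "f ` X \<subseteq> X" shows "continuous_on X (f ^^ n)"
proof (induction n)
  case 0 then show ?case by (simp add: continuous_on_id)
next
  case (Suc n)
  have "(f ^^ Suc n) = f \<circ> (f ^^ n)" by simp
  moreover have "(f ^^ n) ` X \<subseteq> X" using funpow_in[OF assms(2)] by blast
  ultimately show ?case
    using continuous_on_compose[OF Suc] continuous_on_subset[OF assms(1)] by metis
qed

lemma unif_iter:
  assumes "compact X" "continuous_on X f" "f ` X \<subseteq> X" "\<eta> > 0"
  shows "\<exists>r>0. \<forall>u\<in>X. \<forall>v\<in>X. dist u v < r \<longrightarrow> (\<forall>i\<le>T. dist ((f^^i) u) ((f^^i) v) < \<eta>)"
proof (induction T)
  case 0 then show ?case using assms(4) by (intro exI[of _ \<eta>]) auto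
next
  case (Suc T)
  then obtain r where r: "r > 0" "\<forall>u\<in>X. \<forall>v\<in>X. dist u v < r \<longrightarrow> (\<forall>i\<le>T. dist ((f^^i) u) ((f^^i) v) < \<eta>)" by blast
  have "uniformly_continuous_on X (f ^^ Suc T)"
    using compact_uniformly_continuous[OF funpow_cont[OF assms(2,3)] assms(1)] by blast
  then obtain r2 where r2: "r2 > 0" "\<forall>u\<in>X. \<forall>v\<in>X. dist v u < r2 \<longrightarrow> dist ((f^^Suc T) v) ((f^^Suc T) u) < \<eta>"
    unfolding uniformly_continuous_on_def using assms(4) by metis
  show ?case
  proof (intro exI[of _ "min r r2"] conjI ballI impI allI)
    show "min r r2 > 0" using r r2 by simp
    fix u v i assume uv: "u \<in> X" "v \<in> X" "dist u v < min r r2" and i: "i \<le> Suc T"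
    show "dist ((f^^i) u) ((f^^i) v) < \<eta>"
    proof (cases "i \<le> T")
      case True then show ?thesis using r uv by auto
    next
      case False then have "i = Suc T" using i by simp
      then show ?thesis using r2 uv by (metis dist_commute min_less_iff_conj)
    qed
  qed
qed



lemma eventually_near_Omega:
  assumes "compact X" "continuous_on X f" "f ` X \<subseteq> X" "\<eta> > 0" "u \<in> X"
  shows "\<exists>T. \<forall>n\<ge>T. \<exists>p\<in>nonwandering X f. dist ((f^^n) u) p < \<eta>"
proof -
  define \<Omega> where "\<Omega> = nonwandering X f"
  define K where "K = X - (\<Union>p\<in>\<Omega>. ball p \<eta>)"
  have "compact K" unfolding K_def
  proof -
    have "closed (- (\<Union>p\<in>\<Omega>. ball p \<eta>))" by (intro closed_Compl open_UN) auto
    then show "compact (X - (\<Union>p\<in>\<Omega>. ball p \<eta>))"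
      using compact_Int_closed[OF assms(1)] by (simp add: Diff_eq)
  qed
  define \<T> where "\<T> = {V. open V \<and> (\<forall>n\<ge>1. (f^^n) ` (X \<inter> V) \<inter> (X \<inter> V) = {})}"
  have cov: "K \<subseteq> \<Union>\<T>"
  proof
    fix z assume z: "z \<in> K"
    then have zX: "z \<in> X" unfolding K_def by blast
    have "z \<notin> \<Omega>"
    proof
      assume "z \<in> \<Omega>"
      then have "z \<in> (\<Union>p\<in>\<Omega>. ball p \<eta>)" using assms(4) by (auto intro!: bexI[of _ z])
      then show False using z unfolding K_def by blast
    qed
    then have "\<not> (\<forall>U. openin (top_of_set X) U \<and> z \<in> U \<longrightarrow> (\<exists>n\<ge>1. (f ^^ n) ` U \<inter> U \<noteq> {}))"
      using zX unfolding \<Omega>_def nonwandering_def by simp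
    then obtain U where U: "openin (top_of_set X) U" "z \<in> U" "\<not> (\<exists>n\<ge>1. (f ^^ n) ` U \<inter> U \<noteq> {})"
      by blast
    then obtain V where V: "open V" "U = X \<inter> V" by (metis openin_open)
    then have "V \<in> \<T>" using U unfolding \<T>_def by auto
    then show "z \<in> \<Union>\<T>" using U V by auto
  qed
  obtain \<F> where F: "\<F> \<subseteq> \<T>" "finite \<F>" "K \<subseteq> \<Union>\<F>"
    using compactE[OF \<open>compact K\<close> cov] unfolding \<T>_def by blast
  have sub: "finite {n. (f^^n) u \<in> X \<inter> V}" if "V \<in> \<T>" for V
  proof -
    have one: "a = b" if "a \<in> {n. (f^^n) u \<in> X \<inter> V}" "b \<in> {n. (f^^n) u \<in> X \<inter> V}" for a b
    proof (rule ccontr)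
      assume "a \<noteq> b"
      { fix n1 n2 assume n: "n1 < n2" "(f^^n1) u \<in> X \<inter> V" "(f^^n2) u \<in> X \<inter> V"
        have "(f^^(n2-n1)) ((f^^n1) u) = (f^^((n2-n1)+n1)) u" by (simp add: funpow_add)
        also have "(n2-n1)+n1 = n2" using n(1) by simp
        finally have "(f^^(n2-n1)) ((f^^n1) u) = (f^^n2) u" .
        then have "(f^^n2) u \<in> (f^^(n2-n1)) ` (X \<inter> V)" using n(2) by (rule image_eqI[OF sym])
        then have "(f^^(n2-n1)) ` (X \<inter> V) \<inter> (X \<inter> V) \<noteq> {}" using n(3) by (metis IntI empty_iff)
        moreover have "n2 - n1 \<ge> 1" using n(1) by simp
        ultimately have False using \<open>V \<in> \<T>\<close> unfolding \<T>_def by blast } note * = this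
      show False
      proof (cases "a < b")
        case True then show False using that(1,2) by (intro *[of a b]) auto
      next
        case False then have "b < a" using \<open>a \<noteq> b\<close> by simp
        then show False using that(1,2) by (intro *[of b a]) auto
      qed
    qed
    show ?thesis
    proof (cases "{n. (f^^n) u \<in> X \<inter> V} = {}")
      case False then obtain a where "a \<in> {n. (f^^n) u \<in> X \<inter> V}" by blast
      then have "{n. (f^^n) u \<in> X \<inter> V} \<subseteq> {a}" using one by blast
      then show ?thesis using finite_subset by blast
    next
      case True then show ?thesis by (metis finite.emptyI)
    qed
  qed
  have "{n. (f^^n) u \<in> K} \<subseteq> (\<Union>V\<in>\<F>. {n. (f^^n) u \<in> X \<inter> V})"
    using F(3) unfolding K_def by blast
  moreover have "finite (\<Union>V\<in>\<F>. {n. (f^^n) u \<in> X \<inter> V})"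
    using F(1,2) sub by (intro finite_UN_I) auto
  ultimately have fin: "finite {n. (f^^n) u \<in> K}" using finite_subset by blast
  obtain T where T: "\<forall>n\<in>{n. (f^^n) u \<in> K}. n < T"
    using finite_nat_bounded[OF fin] by (metis lessThan_iff subsetD)
  show ?thesis
  proof (intro exI[of _ T] allI impI)
    fix n assume "n \<ge> T"
    then have "(f^^n) u \<notin> K" using T by force
    moreover have "(f^^n) u \<in> X" using funpow_in[OF assms(3,5)] .
    ultimately show "\<exists>p\<in>nonwandering X f. dist ((f^^n) u) p < \<eta>"
      unfolding K_def \<Omega>_def by (auto simp: dist_commute)
  qed
qed



lemma entropy_pos:
  fixes X :: "'a::metric_space set"
  assumes "\<epsilon> > 0" "L > 0"
    and bnd: "\<And>n. \<exists>B::nat. \<forall>E. finite E \<and> separated X f n \<epsilon> E \<longrightarrow> card E \<le> B"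
    and big: "\<And>K. \<exists>E. finite E \<and> separated X f (K*L) \<epsilon> E \<and> card E \<ge> 2^K"
  shows "top_entropy X f > 0"
proof -
  define u where "u n = ereal (ln (real_of_ereal (max_sep X f n \<epsilon>)) / real n)" for n
  have ms: "real_of_ereal (max_sep X f (K*L) \<epsilon>) \<ge> 2^K" for K
  proof -
    obtain B :: nat where B: "\<forall>E. finite E \<and> separated X f (K*L) \<epsilon> E \<longrightarrow> card E \<le> B" using bnd by blast
    obtain E where E: "finite E" "separated X f (K*L) \<epsilon> E" "card E \<ge> 2^K" using big by blast
    have up: "max_sep X f (K*L) \<epsilon> \<le> ereal (real B)"
      unfolding max_sep_def using B by (intro SUP_least) auto
    have lo: "ereal (real (card E)) \<le> max_sep X f (K*L) \<epsilon>"
      unfolding max_sep_def using E by (intro SUP_upper) auto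
    have "real (2^K) \<le> real (card E)" using E(3) by (simp only: of_nat_le_iff)
    then have "ereal (2^K) \<le> ereal (real (card E))" by simp
    then have lo2: "ereal (2^K) \<le> max_sep X f (K*L) \<epsilon>" using lo by order
    obtain r where r: "max_sep X f (K*L) \<epsilon> = ereal r"
      by (cases "max_sep X f (K*L) \<epsilon>") (use up lo2 in auto)
    show ?thesis using lo2 r by simp
  qed
  have ge: "u ((K+1)*L) \<ge> ereal (ln 2 / real L)" for K
  proof -
    have p: "(2::real)^(K+1) > 0" by simp
    have "ln (real_of_ereal (max_sep X f ((K+1)*L) \<epsilon>)) \<ge> ln (2^(K+1))"
      using ms[of "K+1"] p by (subst ln_le_cancel_iff) (linarith, linarith, linarith)
    also have "ln ((2::real)^(K+1)) = real (K+1) * ln 2" by (rule ln_realpow)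
    finally have h: "ln (real_of_ereal (max_sep X f ((K+1)*L) \<epsilon>)) \<ge> real (K+1) * ln 2" .
    have "(real (K+1) * ln 2) / real ((K+1)*L) = (real (K+1) * ln 2) / (real (K+1) * real L)"
      by (simp only: of_nat_mult)
    also have "\<dots> = ln 2 / real L" by (rule mult_divide_mult_cancel_left) simp
    finally have "ln 2 / real L = (real (K+1) * ln 2) / real ((K+1)*L)" by simp
    also have "\<dots> \<le> ln (real_of_ereal (max_sep X f ((K+1)*L) \<epsilon>)) / real ((K+1)*L)"
      using h assms(2) by (intro divide_right_mono) auto
    finally show ?thesis unfolding u_def by simp
  qed
  define r where "r K = (K+1)*L" for K
  have sm: "strict_mono r" unfolding r_def using assms(2) by (intro strict_monoI) simp
  have "ereal (ln 2 / real L) = limsup (\<lambda>K. ereal (ln 2 / real L))" by (simp add: Limsup_const)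
  also have "\<dots> \<le> limsup (u \<circ> r)" using ge unfolding r_def by (intro Limsup_mono) (auto simp: comp_def)
  also have "\<dots> \<le> limsup u" using limsup_subseq_mono[OF sm] .
  also have "\<dots> \<le> top_entropy X f" unfolding top_entropy_def u_def using assms(1)
    by (intro SUP_upper) auto
  finally have "ereal (ln 2 / real L) \<le> top_entropy X f" .
  moreover have "ln 2 / real L > 0" using assms(2) by simp
  ultimately show ?thesis by (metis ereal_less(2) order.strict_trans2)
qed



lemma sep_bound:
  assumes "compact X" "continuous_on X f" "f ` X \<subseteq> X" "\<epsilon> > 0"
  shows "\<exists>B::nat. \<forall>E. finite E \<and> separated X f n \<epsilon> E \<longrightarrow> card E \<le> B"
proof -
  obtain r where r: "r > 0" "\<forall>u\<in>X. \<forall>v\<in>X. dist u v < r \<longrightarrow> (\<forall>i\<le>n. dist ((f^^i) u) ((f^^i) v) < \<epsilon>)"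
    using unif_iter[OF assms] by blast
  have "X \<subseteq> (\<Union>c\<in>X. ball c (r/2))" using r(1) by auto
  then obtain C where C: "C \<subseteq> X" "finite C" "X \<subseteq> (\<Union>c\<in>C. ball c (r/2))"
    using compactE_image[OF assms(1), of X "\<lambda>c. ball c (r/2)"] by blast
  show ?thesis
  proof (intro exI[of _ "card C"] allI impI)
    fix E assume E: "finite E \<and> separated X f n \<epsilon> E"
    then have EX: "E \<subseteq> X" and sep: "\<forall>x\<in>E. \<forall>y\<in>E. x \<noteq> y \<longrightarrow> (\<exists>i<n. dist ((f ^^ i) x) ((f ^^ i) y) > \<epsilon>)"
      unfolding separated_def by auto
    define g where "g x = (SOME c. c \<in> C \<and> x \<in> ball c (r/2))" for x
    have g: "g x \<in> C \<and> x \<in> ball (g x) (r/2)" if "x \<in> E" for x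
    proof -
      have "\<exists>c. c \<in> C \<and> x \<in> ball c (r/2)" using C(3) EX that by blast
      then show ?thesis unfolding g_def by (rule someI_ex)
    qed
    have "inj_on g E"
    proof (rule inj_onI, rule ccontr)
      fix x y assume xy: "x \<in> E" "y \<in> E" "g x = g y" "x \<noteq> y"
      have "dist x y < r"
        using g[OF xy(1)] g[OF xy(2)] xy(3) by (metis dist_commute dist_triangle_half_l mem_ball)
      then have "\<forall>i\<le>n. dist ((f^^i) x) ((f^^i) y) < \<epsilon>" using r(2) xy EX by blast
      moreover obtain i where "i < n" "dist ((f ^^ i) x) ((f ^^ i) y) > \<epsilon>" using sep xy by blast
      ultimately show False by (meson less_imp_le order_less_asym)
    qed
    moreover have "g ` E \<subseteq> C" using g by blast
    ultimately show "card E \<le> card C" using C(2) by (rule card_inj_on_le)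
  qed
qed



lemma mod_step:
  fixes i L :: int assumes "0 < L"
  shows "(i+1) mod L = (if i mod L + 1 = L then 0 else i mod L + 1)"
proof -
  have "(i+1) mod L = (i mod L + 1) mod L" by (simp add: mod_add_left_eq)
  moreover have "0 \<le> i mod L" "i mod L < L" using assms by auto
  ultimately show ?thesis by auto
qed

lemma div_step:
  fixes i L :: int assumes "0 < L" "(i+1) mod L \<noteq> 0"
  shows "(i+1) div L = i div L"
proof -
  have k: "0 \<le> i mod L" "i mod L < L" using assms(1) by auto
  have "i mod L + 1 \<noteq> L" using mod_step[OF assms(1), of i] assms(2) by auto
  then have lt: "i mod L + 1 < L" "0 \<le> i mod L" using k by auto
  have eq: "i + 1 = (i mod L + 1) + L * (i div L)" by simp
  have "(i+1) div L = ((i mod L + 1) + L * (i div L)) div L" by (subst eq) (rule refl)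
  also have "\<dots> = i div L + (i mod L + 1) div L" using assms(1) by (rule div_mult_self2[OF less_imp_neq[symmetric]])
  finally have "(i+1) div L = (i mod L + 1) div L + i div L" by simp
  also have "(i mod L + 1) div L = 0" using lt by (intro div_pos_pos_trivial) auto
  finally show ?thesis by simp
qed

lemma per_po:
  fixes a :: "nat \<Rightarrow> 'a::metric_space"
  assumes L: "L > 0" and aO: "\<forall>i<L. a i \<in> \<Omega>"
    and ch: "\<forall>i. i+1 < L \<longrightarrow> dist (f (a i)) (a (i+1)) \<le> \<delta>"
    and ret: "dist (f (a (L-1))) (a 0) \<le> \<delta>"
  shows "a (nat (i mod int L)) \<in> \<Omega>" "dist (f (a (nat (i mod int L)))) (a (nat ((i+1) mod int L))) \<le> \<delta>"
proof -
  have p: "0 < int L" using L by simp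
  have k: "0 \<le> i mod int L" "i mod int L < int L" using p by auto
  then show "a (nat (i mod int L)) \<in> \<Omega>" using aO by (metis nat_less_iff)
  show "dist (f (a (nat (i mod int L)))) (a (nat ((i+1) mod int L))) \<le> \<delta>"
  proof (cases "i mod int L + 1 = int L")
    case True
    then have "(i+1) mod int L = 0" using mod_step[OF p] by simp
    moreover have "nat (i mod int L) = L - 1" using True by simp
    ultimately show ?thesis using ret by simp
  next
    case False
    then have e: "(i+1) mod int L = i mod int L + 1" using mod_step[OF p] by simp
    have "nat (i mod int L) + 1 < L" using False k by linarith
    moreover have "nat ((i+1) mod int L) = nat (i mod int L) + 1" using e k by simp
    ultimately show ?thesis using ch by simp
  qed
qed



lemma horseshoe:
  fixes a b :: "nat \<Rightarrow> 'a::metric_space"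
  assumes OX: "\<Omega> \<subseteq> X" and eps: "\<epsilon> > 0"
    and shad: "\<And>xs. pseudo_orbit \<Omega> f \<delta> xs \<Longrightarrow> shadowed \<Omega> f \<epsilon> xs"
    and La: "La > 0" and Lb: "Lb > 0" and ab0: "a 0 = b 0"
    and aO: "\<forall>i<La. a i \<in> \<Omega>" and ach: "\<forall>i. i+1 < La \<longrightarrow> dist (f (a i)) (a (i+1)) \<le> \<delta>"
    and aret: "dist (f (a (La-1))) (a 0) \<le> \<delta>"
    and bO: "\<forall>i<Lb. b i \<in> \<Omega>" and bch: "\<forall>i. i+1 < Lb \<longrightarrow> dist (f (b i)) (b (i+1)) \<le> \<delta>"
    and bret: "dist (f (b (Lb-1))) (b 0) \<le> \<delta>"
    and j: "j < La" "j < Lb" and div: "dist (a j) (b j) > 3 * \<epsilon>"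
  shows "\<exists>E. finite E \<and> separated X f (K * (La*Lb)) \<epsilon> E \<and> card E \<ge> 2^K"
proof -
  define Lt where "Lt = La * Lb"
  have Lt: "Lt > 0" unfolding Lt_def using La Lb by simp
  define \<alpha> where "\<alpha> i = a (nat (i mod int La))" for i
  define \<beta> where "\<beta> i = b (nat (i mod int Lb))" for i
  define xs where "xs S i = (if 0 \<le> i \<and> nat (i div int Lt) \<in> S then \<beta> i else \<alpha> i)" for S i
  note pa = per_po[OF La aO ach aret] and pb = per_po[OF Lb bO bch bret]
  have bound: "Lt = La * Lb" using Lt_def by simp
  have zero: "\<alpha> i = \<beta> i" if "i mod int Lt = 0" for i
  proof -
    have "int La dvd i" "int Lb dvd i" using that unfolding Lt_def
      by (metis dvd_mult_left dvd_mult_right mod_0_imp_dvd of_nat_mult)+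
    then have "i mod int La = 0" "i mod int Lb = 0" by auto
    then show ?thesis unfolding \<alpha>_def \<beta>_def using ab0 by simp
  qed
  have po: "pseudo_orbit \<Omega> f \<delta> (xs S)" for S
    unfolding pseudo_orbit_def
  proof (intro conjI allI)
    fix i show "xs S i \<in> \<Omega>" unfolding xs_def \<alpha>_def \<beta>_def using pa(1) pb(1) by auto
  next
    fix i
    show "dist (f (xs S i)) (xs S (i + 1)) \<le> \<delta>"
    proof (cases "(0 \<le> i \<and> nat (i div int Lt) \<in> S) = (0 \<le> i+1 \<and> nat ((i+1) div int Lt) \<in> S)")
      case True
      then show ?thesis unfolding xs_def \<alpha>_def \<beta>_def using pa(2) pb(2) by auto
    next
      case False
      have "(i+1) mod int Lt = 0"
      proof (rule ccontr)
        assume nz: "(i+1) mod int Lt \<noteq> 0"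
        then have "(i+1) div int Lt = i div int Lt" using Lt by (intro div_step) auto
        moreover have "i \<noteq> -1" using nz by auto
        ultimately show False using False by auto
      qed
      then have "\<alpha> (i+1) = \<beta> (i+1)" by (rule zero)
      then have "xs S (i+1) = \<alpha> (i+1)" "xs S (i+1) = \<beta> (i+1)" unfolding xs_def by auto
      moreover have "xs S i = \<alpha> i \<or> xs S i = \<beta> i" unfolding xs_def by auto
      ultimately show ?thesis using pa(2)[of i] pb(2)[of i] unfolding \<alpha>_def \<beta>_def by auto
    qed
  qed
  have "\<exists>z. z \<in> \<Omega> \<and> (\<forall>i. dist (zit \<Omega> f i z) (xs S i) \<le> \<epsilon>)" for S
    using shad[OF po[of S]] unfolding shadowed_def by blast
  then obtain z where z: "\<And>S. z S \<in> \<Omega>" "\<And>S i. dist (zit \<Omega> f i (z S)) (xs S i) \<le> \<epsilon>" by metis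
  have zn: "dist ((f^^n) (z S)) (xs S (int n)) \<le> \<epsilon>" for S n
    using z(2)[where S=S and i="int n"] unfolding zit_def by simp
  have sepS: "\<exists>n < K * Lt. dist ((f^^n) (z S)) ((f^^n) (z S')) > \<epsilon>"
    if S: "S \<subseteq> {..<K}" "S' \<subseteq> {..<K}" "S \<noteq> S'" for S S'
  proof -
    obtain t where t: "t < K" "(t \<in> S) \<noteq> (t \<in> S')" using S by blast
    define n where "n = t * Lt + j"
    have "La \<le> La * Lb" using Lb by simp
    then have jLt: "j < Lt" unfolding Lt_def using j by linarith
    have "Suc t * Lt \<le> K * Lt" using t(1) by (intro mult_le_mono1) simp
    then have nlt: "n < K * Lt" unfolding n_def using jLt by simp
    have ndiv: "nat (int n div int Lt) = t" unfolding n_def using jLt by (simp add: nat_div_distrib[symmetric] )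
    have "n = j + La * (t * Lb)" unfolding n_def Lt_def by (simp add: algebra_simps)
    then have "n mod La = j" using j by simp
    then have "int n mod int La = int j" by (metis of_nat_mod)
    then have an: "\<alpha> (int n) = a j" unfolding \<alpha>_def by simp
    have "n = j + Lb * (t * La)" unfolding n_def Lt_def by (simp add: algebra_simps)
    then have "n mod Lb = j" using j by simp
    then have "int n mod int Lb = int j" by (metis of_nat_mod)
    then have bn: "\<beta> (int n) = b j" unfolding \<beta>_def by simp
    have x1: "xs S (int n) = (if t \<in> S then b j else a j)" "xs S' (int n) = (if t \<in> S' then b j else a j)"
      unfolding xs_def using ndiv an bn by auto
    then have "dist (xs S (int n)) (xs S' (int n)) = dist (a j) (b j)" using t(2) by (auto simp: dist_commute)
    then have "dist (xs S (int n)) (xs S' (int n)) > 3 * \<epsilon>" using div by simp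
    moreover have "dist (xs S (int n)) (xs S' (int n)) \<le> dist ((f^^n) (z S)) (xs S (int n)) + dist ((f^^n) (z S)) ((f^^n) (z S')) + dist ((f^^n) (z S')) (xs S' (int n))"
      using dist_triangle[of "xs S (int n)" "xs S' (int n)" "(f^^n) (z S)"]
        dist_triangle[of "(f^^n) (z S)" "xs S' (int n)" "(f^^n) (z S')"]
      by (simp add: dist_commute)
    ultimately have "dist ((f^^n) (z S)) ((f^^n) (z S')) > \<epsilon>" using zn[of n S] zn[of n S'] by linarith
    then show ?thesis using nlt by blast
  qed
  define E where "E = z ` Pow {..<K}"
  have inj: "inj_on z (Pow {..<K})"
  proof (rule inj_onI, rule ccontr)
    fix S S' assume "S \<in> Pow {..<K}" "S' \<in> Pow {..<K}" "z S = z S'" "S \<noteq> S'"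
    then show False using sepS[of S S'] eps by auto
  qed
  have cE: "card E = 2^K" unfolding E_def using card_image[OF inj] by (simp add: card_Pow)
  have "separated X f (K * Lt) \<epsilon> E"
    unfolding separated_def
  proof (intro conjI ballI impI)
    show "E \<subseteq> X" unfolding E_def using z(1) OX by blast
    fix x y assume "x \<in> E" "y \<in> E" "x \<noteq> y"
    then obtain S S' where "S \<subseteq> {..<K}" "S' \<subseteq> {..<K}" "x = z S" "y = z S'" "S \<noteq> S'" unfolding E_def by auto
    then show "\<exists>i<K * Lt. \<epsilon> < dist ((f ^^ i) x) ((f ^^ i) y)" using sepS by blast
  qed
  moreover have "finite E" unfolding E_def by simp
  ultimately show ?thesis using cE unfolding Lt_def by auto
qed



context
  fixes M :: "'a::metric_space measure" and X :: "'a set"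
  assumes sM: "sets M = sets (restrict_space borel X)"
begin

lemma spM: "space M = X"
  using sets_eq_imp_space_eq[OF sM] by (simp add: space_restrict_space)

lemma XM: "X \<in> sets M" using sets.top[of M] spM by simp

lemma meas_open:
  assumes "continuous_on X h" "open V" shows "{u\<in>X. h u \<in> V} \<in> sets M"
proof -
  have "openin (top_of_set X) (X \<inter> h -` V)" by (rule continuous_openin_preimage_gen[OF assms])
  then obtain V' where V': "open V'" "X \<inter> h -` V = X \<inter> V'" by (metis openin_open)
  have "{u\<in>X. h u \<in> V} = X \<inter> V'" using V' by blast
  moreover have "V' \<in> sets borel" using V' by simp
  ultimately show ?thesis unfolding sM sets_restrict_space by blast
qed

lemma meas_closed:
  assumes "continuous_on X h" "closed V" shows "{u\<in>X. h u \<in> V} \<in> sets M"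
proof -
  have "closedin (top_of_set X) (X \<inter> h -` V)" by (rule continuous_closedin_preimage[OF assms])
  then obtain V' where V': "closed V'" "X \<inter> h -` V = X \<inter> V'" by (metis closedin_closed)
  have "{u\<in>X. h u \<in> V} = X \<inter> V'" using V' by blast
  moreover have "V' \<in> sets borel" using V' by simp
  ultimately show ?thesis unfolding sM sets_restrict_space by blast
qed

lemma meas_all:
  fixes P :: "nat \<Rightarrow> 'a \<Rightarrow> bool"
  assumes "\<And>n. {u\<in>X. P n u} \<in> sets M" shows "{u\<in>X. \<forall>n. P n u} \<in> sets M"
proof -
  have "{u\<in>X. \<forall>n. P n u} = (\<Inter>n. {u\<in>X. P n u})" by blast
  also have "\<dots> \<in> sets M" using assms by (intro sets.countable_INT) auto
  finally show ?thesis .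
qed

lemma meas_ex:
  fixes P :: "nat \<Rightarrow> 'a \<Rightarrow> bool"
  assumes "\<And>n. {u\<in>X. P n u} \<in> sets M" shows "{u\<in>X. \<exists>n. P n u} \<in> sets M"
proof -
  have "{u\<in>X. \<exists>n. P n u} = (\<Union>n. {u\<in>X. P n u})" by blast
  also have "\<dots> \<in> sets M" using assms by (intro sets.countable_UN) auto
  finally show ?thesis .
qed

lemma meas_imp:
  assumes "{u\<in>X. P u} \<in> sets M" shows "{u\<in>X. Q \<longrightarrow> P u} \<in> sets M"
  using assms XM by (cases Q) auto

lemma meas_conj:
  assumes "{u\<in>X. P u} \<in> sets M" "{u\<in>X. Q u} \<in> sets M" shows "{u\<in>X. P u \<and> Q u} \<in> sets M"
proof -
  have "{u\<in>X. P u \<and> Q u} = {u\<in>X. P u} \<inter> {u\<in>X. Q u}" by blast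
  then show ?thesis using assms by simp
qed

end



lemma exists_pos:
  fixes M :: "'a::metric_space measure"
  assumes "prob_space M" "sets M = sets (restrict_space borel X)" "countable I"
    "\<And>i. i \<in> I \<Longrightarrow> W i \<in> sets M" "X \<subseteq> (\<Union>i\<in>I. W i)"
  shows "\<exists>i\<in>I. emeasure M (W i) \<noteq> 0"
proof (rule ccontr)
  assume "\<not> ?thesis"
  then have "\<And>i. i \<in> I \<Longrightarrow> W i \<in> null_sets M" using assms(4) by (auto intro: null_setsI)
  then have "(\<Union>i\<in>I. W i) \<in> null_sets M" using assms(3) by (rule null_sets_UN'[rotated])
  then have "X \<in> null_sets M" using null_sets_subset XM[OF assms(2)] assms(5) by blast
  then have "emeasure M X = 0" by auto
  moreover have "emeasure M X = 1" using prob_space.emeasure_space_1[OF assms(1)] spM[OF assms(2)] by simp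
  ultimately show False by simp
qed



theorem theorem1:
  fixes X :: "'a::metric_space set" and f :: "'a \<Rightarrow> 'a"
  assumes "compact X"
    and "\<exists>g. homeomorphism X X f g"
    and "POTP (nonwandering X f) f"
    and "\<exists>M. pos_expansive_measure X f M"
  shows "top_entropy X f > 0"
proof -
  obtain g where "homeomorphism X X f g" using assms(2) by blast
  then have cont: "continuous_on X f" and fX: "f ` X \<subseteq> X" unfolding homeomorphism_def by auto
  note cpt = assms(1)
  have fnX: "\<And>n u. u \<in> X \<Longrightarrow> (f^^n) u \<in> X" using funpow_in[OF fX] by blast
  have fncont: "\<And>n. continuous_on X (f^^n)" using funpow_cont[OF cont fX] by blast
  obtain M e where prob: "prob_space M" and sM: "sets M = sets (restrict_space borel X)"
    and e: "e > 0" and null: "\<forall>x\<in>X. emeasure M (Phi X f e x) = 0"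
    using assms(4) unfolding pos_expansive_measure_def by blast
  define \<Omega> where "\<Omega> = nonwandering X f"
  have OX: "\<Omega> \<subseteq> X" unfolding \<Omega>_def nonwandering_def by blast
  define \<epsilon> where "\<epsilon> = e / 4"
  have eps: "\<epsilon> > 0" unfolding \<epsilon>_def using e by simp
  obtain \<delta> where dl: "\<delta> > 0" and shad: "\<And>xs. pseudo_orbit \<Omega> f \<delta> xs \<Longrightarrow> shadowed \<Omega> f \<epsilon> xs"
    using assms(3) eps unfolding POTP_def \<Omega>_def by blast
  obtain \<eta>0 where e0: "\<eta>0 > 0" and uc: "\<forall>u\<in>X. \<forall>v\<in>X. dist u v < \<eta>0 \<longrightarrow> (\<forall>i\<le>1. dist ((f^^i) u) ((f^^i) v) < \<delta>/4)"
    using unif_iter[OF cpt cont fX, of "\<delta>/4" 1] dl by auto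
  have ucf: "dist (f u) (f v) < \<delta>/4" if "u \<in> X" "v \<in> X" "dist u v < \<eta>0" for u v
  proof -
    have "dist ((f^^1) u) ((f^^1) v) < \<delta>/4" using uc that by blast
    then show ?thesis by simp
  qed
  define \<eta> where "\<eta> = min (\<eta>0/4) (min (\<delta>/8) (e/8))"
  have eta: "\<eta> > 0" "2*\<eta> < \<eta>0" "\<eta> \<le> \<delta>/8" "\<eta> \<le> e/8" unfolding \<eta>_def using e0 dl e by auto
  define r where "r = \<delta>/8"
  have r: "r > 0" unfolding r_def using dl by simp
  have "X \<subseteq> (\<Union>c\<in>X. ball c r)" using r by auto
  then obtain C where C: "C \<subseteq> X" "finite C" "X \<subseteq> (\<Union>c\<in>C. ball c r)"
    using compactE_image[OF cpt, of X "\<lambda>c. ball c r"] by blast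
  define N where "N = (\<Union>p\<in>\<Omega>. ball p \<eta>)"
  have openN: "open N" unfolding N_def by auto
  define W where "W = (\<lambda>(c, T). {u\<in>X. (f^^T) u \<in> cball c r \<and> (\<forall>n. T \<le> n \<longrightarrow> (f^^n) u \<in> N)
                    \<and> (\<forall>k. \<exists>n. k \<le> n \<and> (f^^n) u \<in> cball c r)})"
  have Wmeas: "W (c, T) \<in> sets M" for c T
  proof -
    have a: "{u\<in>X. (f^^n) u \<in> cball c r} \<in> sets M" for n
      by (rule meas_closed[OF sM fncont]) simp
    have b: "{u\<in>X. (f^^n) u \<in> N} \<in> sets M" for n
      by (rule meas_open[OF sM fncont openN])
    have "{u\<in>X. \<forall>n. T \<le> n \<longrightarrow> (f^^n) u \<in> N} \<in> sets M"
      by (intro meas_all[OF sM] meas_imp[OF sM] b)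
    moreover have "{u\<in>X. \<forall>k. \<exists>n. k \<le> n \<and> (f^^n) u \<in> cball c r} \<in> sets M"
    proof (rule meas_all[OF sM], rule meas_ex[OF sM])
      fix k n
      show "{u\<in>X. k \<le> n \<and> (f^^n) u \<in> cball c r} \<in> sets M"
      proof (cases "k \<le> n")
        case True then show ?thesis using a[of n] by simp
      next
        case False then show ?thesis by simp
      qed
    qed
    ultimately have "{u\<in>X. (f^^T) u \<in> cball c r \<and> ((\<forall>n. T \<le> n \<longrightarrow> (f^^n) u \<in> N)
                    \<and> (\<forall>k. \<exists>n. k \<le> n \<and> (f^^n) u \<in> cball c r))} \<in> sets M"
      by (intro meas_conj[OF sM] a)
    then show ?thesis unfolding W_def by simp
  qed
  have Wcov: "X \<subseteq> (\<Union>i\<in>C \<times> UNIV. W i)"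
  proof
    fix u assume u: "u \<in> X"
    have "\<exists>c\<in>C. \<forall>k. \<exists>n. k \<le> n \<and> (f^^n) u \<in> cball c r"
    proof (rule ccontr)
      assume "\<not> ?thesis"
      then have "\<forall>c\<in>C. \<exists>k. \<forall>n. k \<le> n \<longrightarrow> (f^^n) u \<notin> cball c r" by blast
      then obtain k where k: "\<forall>c\<in>C. \<forall>n. k c \<le> n \<longrightarrow> (f^^n) u \<notin> cball c r" by metis
      define n where "n = Max (k ` C)"
      have "\<forall>c\<in>C. k c \<le> n" unfolding n_def using C(2) by simp
      then have "\<forall>c\<in>C. (f^^n) u \<notin> cball c r" using k by blast
      moreover obtain c where "c \<in> C" "(f^^n) u \<in> ball c r" using C(3) fnX[OF u] by blast
      ultimately show False by auto
    qed
    then obtain c where c: "c \<in> C" "\<forall>k. \<exists>n. k \<le> n \<and> (f^^n) u \<in> cball c r" by blast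
    obtain T0 where T0: "\<forall>n\<ge>T0. \<exists>p\<in>\<Omega>. dist ((f^^n) u) p < \<eta>"
      using eventually_near_Omega[OF cpt cont fX eta(1) u] unfolding \<Omega>_def by blast
    obtain T where T: "T0 \<le> T" "(f^^T) u \<in> cball c r" using c(2) by blast
    have "\<forall>n. T \<le> n \<longrightarrow> (f^^n) u \<in> N" unfolding N_def using T0 T(1)
      by (auto simp: dist_commute)
    then have "u \<in> W (c, T)" unfolding W_def using u T(2) c(2) by simp
    then show "u \<in> (\<Union>i\<in>C \<times> UNIV. W i)" using c(1) by blast
  qed
  obtain c T where cT: "emeasure M (W (c, T)) \<noteq> 0"
    using exists_pos[OF prob sM _ _ Wcov] C(2) Wmeas by (auto simp: countable_finite)
  have WM: "W (c, T) \<in> sets M" by (rule Wmeas)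
  have WX: "W (c, T) \<subseteq> X" unfolding W_def by auto
  obtain rr where rr: "rr > 0" "\<forall>u\<in>X. \<forall>v\<in>X. dist u v < rr \<longrightarrow> (\<forall>i\<le>T. dist ((f^^i) u) ((f^^i) v) < \<eta>)"
    using unif_iter[OF cpt cont fX eta(1)] by blast
  have "X \<subseteq> (\<Union>c\<in>X. ball c (rr/2))" using rr(1) by auto
  then obtain C2 where C2: "C2 \<subseteq> X" "finite C2" "X \<subseteq> (\<Union>c\<in>C2. ball c (rr/2))"
    using compactE_image[OF cpt, of X "\<lambda>c. ball c (rr/2)"] by blast
  define P where "P c' = W (c, T) \<inter> {u\<in>X. id u \<in> ball c' (rr/2)}" for c'
  have PM: "P c' \<in> sets M" for c'
    unfolding P_def using WM meas_open[OF sM continuous_on_id, of "ball c' (rr/2)"] by auto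
  obtain c' where c': "emeasure M (P c') \<noteq> 0"
  proof (rule ccontr)
    assume "\<not> thesis"
    then have "\<And>c'. c' \<in> C2 \<Longrightarrow> P c' \<in> null_sets M" using PM that by (auto intro: null_setsI)
    then have "(\<Union>c'\<in>C2. P c') \<in> null_sets M" using C2(2) by (intro null_sets_UN') (auto simp: countable_finite)
    moreover have "W (c, T) \<subseteq> (\<Union>c'\<in>C2. P c')"
    proof
      fix u assume u: "u \<in> W (c, T)"
      then have "u \<in> X" using WX by blast
      then obtain d where "d \<in> C2" "u \<in> ball d (rr/2)" using C2(3) by blast
      then show "u \<in> (\<Union>c'\<in>C2. P c')" using u \<open>u \<in> X\<close> unfolding P_def by auto
    qed
    ultimately have "W (c, T) \<in> null_sets M" using null_sets_subset WM by blast
    then show False using cT by auto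
  qed
  define A where "A = P c'"
  have AM: "A \<in> sets M" unfolding A_def by (rule PM)
  have "A \<noteq> {}" using c' unfolding A_def by auto
  then obtain x where xA: "x \<in> A" by blast
  have xX: "x \<in> X" using xA WX unfolding A_def P_def by auto
  have PhiM: "Phi X f e x \<in> sets M"
  proof -
    have "Phi X f e x = {y\<in>X. \<forall>i. (f^^i) y \<in> cball ((f^^i) x) e}" unfolding Phi_def by (simp add: mem_cball)
    also have "\<dots> \<in> sets M" by (intro meas_all[OF sM] meas_closed[OF sM fncont]) simp
    finally show ?thesis .
  qed
  have "\<not> A \<subseteq> Phi X f e x"
  proof
    assume "A \<subseteq> Phi X f e x"
    then have "emeasure M A \<le> emeasure M (Phi X f e x)" using PhiM by (rule emeasure_mono)
    then show False using null xX c' unfolding A_def by simp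
  qed
  then obtain y where yA: "y \<in> A" and yPhi: "y \<notin> Phi X f e x" by blast
  have yX: "y \<in> X" using yA WX unfolding A_def P_def by auto
  obtain m where m: "dist ((f^^m) x) ((f^^m) y) > e" using yPhi yX unfolding Phi_def by (auto simp: not_le)
  have xy: "dist x y < rr"
  proof -
    have "dist x c' < rr/2" "dist y c' < rr/2" using xA yA unfolding A_def P_def by (auto simp: dist_commute)
    then show ?thesis using dist_triangle[of x y c'] by (simp add: dist_commute)
  qed
  then have close: "\<forall>i\<le>T. dist ((f^^i) x) ((f^^i) y) < \<eta>" using rr(2) xX yX by blast
  have mT: "T < m"
  proof (rule ccontr)
    assume "\<not> T < m"
    then have "dist ((f^^m) x) ((f^^m) y) < \<eta>" using close by simp
    then show False using m eta(4) e by linarith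
  qed
  have xW: "(f^^T) x \<in> cball c r" "\<forall>n. T \<le> n \<longrightarrow> (f^^n) x \<in> N" "\<forall>k. \<exists>n. k \<le> n \<and> (f^^n) x \<in> cball c r"
    using xA unfolding A_def P_def W_def by auto
  have yW: "(f^^T) y \<in> cball c r" "\<forall>n. T \<le> n \<longrightarrow> (f^^n) y \<in> N" "\<forall>k. \<exists>n. k \<le> n \<and> (f^^n) y \<in> cball c r"
    using yA unfolding A_def P_def W_def by auto
  obtain nx where nx: "m+1 \<le> nx" "(f^^nx) x \<in> cball c r" using xW(3) by blast
  obtain ny where ny: "m+1 \<le> ny" "(f^^ny) y \<in> cball c r" using yW(3) by blast
  have proj: "\<exists>p. p \<in> \<Omega> \<and> dist ((f^^n) z) p < \<eta>" if "\<forall>n. T \<le> n \<longrightarrow> (f^^n) z \<in> N" "T \<le> n" for z n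
    using that unfolding N_def by (auto simp: dist_commute)
  define \<pi>x where "\<pi>x n = (SOME p. p \<in> \<Omega> \<and> dist ((f^^n) x) p < \<eta>)" for n
  define \<pi>y where "\<pi>y n = (SOME p. p \<in> \<Omega> \<and> dist ((f^^n) y) p < \<eta>)" for n
  have \<pi>x: "\<forall>n\<ge>T. \<pi>x n \<in> \<Omega> \<and> dist ((f^^n) x) (\<pi>x n) < \<eta>"
    unfolding \<pi>x_def using proj[OF xW(2)] by (metis (no_types, lifting) someI_ex)
  have \<pi>y: "\<forall>n\<ge>T. \<pi>y n \<in> \<Omega> \<and> dist ((f^^n) y) (\<pi>y n) < \<eta>"
    unfolding \<pi>y_def using proj[OF yW(2)] by (metis (no_types, lifting) someI_ex)
  have st1: "dist (f (\<pi> n)) ((f^^Suc n) z) < \<delta>/4"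
    if "z \<in> X" "\<forall>n\<ge>T. \<pi> n \<in> \<Omega> \<and> dist ((f^^n) z) (\<pi> n) < \<eta>" "T \<le> n" for z \<pi> n
  proof -
    have "\<pi> n \<in> X" "dist (\<pi> n) ((f^^n) z) < \<eta>0" using that OX eta by (auto simp: dist_commute)
    then have "dist (f (\<pi> n)) (f ((f^^n) z)) < \<delta>/4" using ucf fnX[OF that(1)] by blast
    then show ?thesis by simp
  qed
  have step: "dist (f (\<pi> n)) (\<pi> (Suc n)) \<le> \<delta>"
    if "z \<in> X" "\<forall>n\<ge>T. \<pi> n \<in> \<Omega> \<and> dist ((f^^n) z) (\<pi> n) < \<eta>" "T \<le> n" for z \<pi> n
  proof -
    have "T \<le> Suc n" using that(3) by simp
    then have "dist ((f^^Suc n) z) (\<pi> (Suc n)) < \<eta>" using that(2) by blast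
    then show ?thesis using st1[OF that] dist_triangle[of "f (\<pi> n)" "\<pi> (Suc n)" "(f^^Suc n) z"] eta
      by linarith
  qed
  define p where "p = \<pi>x T"
  define La where "La = nx - T"
  define Lb where "Lb = ny - T"
  define a where "a i = \<pi>x (T + i)" for i
  define b where "b i = (if i = 0 then p else \<pi>y (T + i))" for i
  define j where "j = m - T"
  have pO: "p \<in> \<Omega>" and pd: "dist ((f^^T) x) p < \<eta>" unfolding p_def using \<pi>x by auto
  have La: "La > 0" "T + (La - 1) = nx - 1" "T \<le> nx - 1" unfolding La_def using nx mT by auto
  have Lb: "Lb > 0" "T + (Lb - 1) = ny - 1" "Lb - 1 \<noteq> 0" "T \<le> ny - 1" unfolding Lb_def using ny mT by auto
  have jj: "j < La" "j < Lb" "j \<noteq> 0" "T + j = m" unfolding j_def La_def Lb_def using mT nx ny by auto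
  have ab0: "a 0 = b 0" unfolding a_def b_def p_def by simp
  have aO: "\<forall>i<La. a i \<in> \<Omega>" unfolding a_def using \<pi>x by simp
  have bO: "\<forall>i<Lb. b i \<in> \<Omega>" unfolding b_def using \<pi>y pO by simp
  have ach: "\<forall>i. i+1 < La \<longrightarrow> dist (f (a i)) (a (i+1)) \<le> \<delta>"
    unfolding a_def using step[OF xX \<pi>x] by simp
  have Ty: "dist p ((f^^T) y) < 2*\<eta>"
  proof -
    have "dist ((f^^T) x) ((f^^T) y) < \<eta>" using close by simp
    then show ?thesis using pd dist_triangle[of p "(f^^T) y" "(f^^T) x"] by (simp add: dist_commute)
  qed
  have bch: "\<forall>i. i+1 < Lb \<longrightarrow> dist (f (b i)) (b (i+1)) \<le> \<delta>"
  proof (intro allI impI)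
    fix i assume "i + 1 < Lb"
    show "dist (f (b i)) (b (i+1)) \<le> \<delta>"
    proof (cases "i = 0")
      case False then show ?thesis unfolding b_def using step[OF yX \<pi>y, of "T+i"] by simp
    next
      case True
      have "dist (f p) (f ((f^^T) y)) < \<delta>/4" using ucf pO OX fnX[OF yX] Ty eta by auto
      then have "dist (f p) ((f^^Suc T) y) < \<delta>/4" by simp
      moreover have "dist ((f^^Suc T) y) (\<pi>y (Suc T)) < \<eta>" using \<pi>y le_SucI[OF order_refl] by blast
      ultimately show ?thesis unfolding b_def using True dist_triangle[of "f p" "\<pi>y (Suc T)" "(f^^Suc T) y"] eta
        by simp
    qed
  qed
  have cx: "dist ((f^^nx) x) ((f^^T) x) \<le> 2 * r"
    using nx(2) xW(1) dist_triangle[of "(f^^nx) x" "(f^^T) x" c] by (simp add: dist_commute)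
  have cy: "dist ((f^^ny) y) ((f^^T) y) \<le> 2 * r"
    using ny(2) yW(1) dist_triangle[of "(f^^ny) y" "(f^^T) y" c] by (simp add: dist_commute)
  have aret: "dist (f (a (La-1))) (a 0) \<le> \<delta>"
  proof -
    have "dist (f (\<pi>x (nx-1))) ((f^^Suc (nx-1)) x) < \<delta>/4" using st1[OF xX \<pi>x La(3)] .
    moreover have "Suc (nx - 1) = nx" using nx by simp
    ultimately have h: "dist (f (\<pi>x (nx-1))) ((f^^nx) x) < \<delta>/4" by simp
    have "dist (f (\<pi>x (nx-1))) p \<le> dist (f (\<pi>x (nx-1))) ((f^^nx) x) + dist ((f^^nx) x) ((f^^T) x) + dist ((f^^T) x) p"
      using dist_triangle[of "f (\<pi>x (nx-1))" p "(f^^nx) x"] dist_triangle[of "(f^^nx) x" p "(f^^T) x"] by linarith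
    then have "dist (f (\<pi>x (nx-1))) p \<le> \<delta>" using h cx pd eta unfolding r_def by linarith
    then show ?thesis unfolding a_def p_def using La(2) by simp
  qed
  have bret: "dist (f (b (Lb-1))) (b 0) \<le> \<delta>"
  proof -
    have "dist (f (\<pi>y (ny-1))) ((f^^Suc (ny-1)) y) < \<delta>/4" using st1[OF yX \<pi>y Lb(4)] .
    moreover have "Suc (ny - 1) = ny" using ny by simp
    ultimately have h: "dist (f (\<pi>y (ny-1))) ((f^^ny) y) < \<delta>/4" by simp
    have "dist (f (\<pi>y (ny-1))) p \<le> dist (f (\<pi>y (ny-1))) ((f^^ny) y) + dist ((f^^ny) y) ((f^^T) y) + dist ((f^^T) y) p"
      using dist_triangle[of "f (\<pi>y (ny-1))" p "(f^^ny) y"] dist_triangle[of "(f^^ny) y" p "(f^^T) y"] by linarith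
    then have "dist (f (\<pi>y (ny-1))) p \<le> \<delta>" using h cy Ty eta unfolding r_def by (simp add: dist_commute)
    then show ?thesis unfolding b_def using Lb(2,3) by simp
  qed
  have dv: "dist (a j) (b j) > 3 * \<epsilon>"
  proof -
    have ab: "a j = \<pi>x m" "b j = \<pi>y m" unfolding a_def b_def using jj by auto
    have "dist ((f^^m) x) (\<pi>x m) < \<eta>" "dist ((f^^m) y) (\<pi>y m) < \<eta>" using \<pi>x \<pi>y mT by auto
    moreover have "dist ((f^^m) x) ((f^^m) y) \<le> dist ((f^^m) x) (\<pi>x m) + dist (\<pi>x m) (\<pi>y m) + dist ((f^^m) y) (\<pi>y m)"
      using dist_triangle[of "(f^^m) x" "(f^^m) y" "\<pi>x m"] dist_triangle[of "\<pi>x m" "(f^^m) y" "\<pi>y m"]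
      by (simp add: dist_commute)
    ultimately show ?thesis using m eta(4) unfolding \<epsilon>_def ab by linarith
  qed
  have big: "\<exists>E. finite E \<and> separated X f (K * (La*Lb)) \<epsilon> E \<and> card E \<ge> 2^K" for K
    by (rule horseshoe[OF OX eps shad La(1) Lb(1) ab0 aO ach aret bO bch bret jj(1,2) dv])
  show ?thesis
    by (rule entropy_pos[OF eps _ sep_bound[OF cpt cont fX eps] big]) (use La(1) Lb(1) in simp)
qed

end
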